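(* For every $\mathbf{x}\in\mathbb{R}^{n_t}$, the Fisher information matrix $\mathbf{J}(\mathbf{x})$ of the family of densities $p(y,\mathbf{h}\mid\mathbf{x})=\left(\prod_{i=1}^{n_t}\phi(h_i)\right)Q(-y\,\mathbf{h}^{\mathsf T}\mathbf{x})$, $y\in\{-1,1\}$, $\mathbf{h}\in\mathbb{R}^{n_t}$, with respect to the parameter $\mathbf{x}$ satisfies $$\det\mathbf{J}(\mathbf{x})=\zeta_0(\|\mathbf{x}\|)^{n_t-1}\zeta_2(\|\mathbf{x}\|).$$
   Context: $\phi(t)=\frac{1}{\sqrt{2\pi}}e^{-t^2/2}$, $Q(x)=\int_x^\infty\phi(t)dt$, $\xi(s):=\frac{\phi^2(s)}{Q(s)(1-Q(s))}$, and $\zeta_k(t):=\mathbb{E}[S^k\xi(tS)]$ for $t\in\mathbb{R}$, $k\in\mathbb{Z}$, $S\sim\mathcal{N}(0,1)$. The density is with respect to Lebesgue measure in $\mathbf{h}$ times counting measure in $y$; $\mathbf{J}(\mathbf{x})=\mathbb{E}_{y,\mathbf{h}\mid\mathbf{x}}[\nabla_{\mathbf{x}}\ln p(y,\mathbf{h}\mid\mathbf{x})\nabla_{\mathbf{x}}^{\mathsf T}\ln p(y,\mathbf{h}\mid\mathbf{x})]$. *)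

theory Defs
  imports "HOL-Analysis.Analysis"
begin

definition std_phi :: "real \<Rightarrow> real" where
  "std_phi t = exp (- (t\<^sup>2) / 2) / sqrt (2 * pi)"

definition Qfun :: "real \<Rightarrow> real" where
  "Qfun x = (LBINT t:{x..}. std_phi t)"

definition xi :: "real \<Rightarrow> real" where
  "xi s = (std_phi s)\<^sup>2 / (Qfun s * (1 - Qfun s))"

definition zeta :: "int \<Rightarrow> real \<Rightarrow> real" where
  "zeta k t = (LINT s|lborel. std_phi s * (s powi k) * xi (t * s))"

definition dens :: "real^'n \<Rightarrow> real \<Rightarrow> real^'n \<Rightarrow> real" where
  "dens x y h = (\<Prod>i\<in>UNIV. std_phi (h $ i)) * Qfun (- y * (h \<bullet> x))"

definition score :: "real^'n \<Rightarrow> real \<Rightarrow> real^'n \<Rightarrow> 'n \<Rightarrow> real" where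
  "score x y h i = deriv (\<lambda>t. ln (dens (x + t *\<^sub>R axis i 1) y h)) 0"

definition fisher :: "real^'n \<Rightarrow> real^'n^'n" where
  "fisher x = (\<chi> i j. LINT h|lborel.
      (\<Sum>y\<in>{-1, 1::real}. dens x y h * score x y h i * score x y h j))"

end

theory Submission
  imports Defs "HOL-Probability.Distributions"
begin

lemma std_phi_eq: "std_phi = std_normal_density"
  by (rule ext) (simp add: std_phi_def std_normal_density_def field_simps)

lemma std_phi_pos: "std_phi t > 0"
  by (simp add: std_phi_def)

lemma std_phi_even: "std_phi (- t) = std_phi t"
  by (simp add: std_phi_def)

lemma cont_std_phi: "continuous_on A std_phi"
  unfolding std_phi_def by (intro continuous_intros) auto

lemma isCont_std_phi: "isCont std_phi x"
  unfolding std_phi_def by (intro continuous_intros) auto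

lemma std_phi_meas[measurable]: "std_phi \<in> borel_measurable borel"
  by (simp add: std_phi_eq)

lemma integrable_std_phi: "integrable lborel std_phi"
  by (simp add: std_phi_eq)

lemma integral_std_phi: "(LINT t|lborel. std_phi t) = 1"
  by (simp add: std_phi_eq)

lemma interval_integrable_std_phi: "interval_lebesgue_integrable lborel a b std_phi"
proof -
  have "integrable lborel (\<lambda>x. indicator A x *\<^sub>R std_phi x)" if "A \<in> sets lborel" for A :: "real set"
    by (rule integrable_mult_indicator[OF that integrable_std_phi])
  then show ?thesis unfolding interval_lebesgue_integrable_def set_integrable_def by auto
qed

lemma Qfun_Ioi: "Qfun u = (LBINT t=ereal u..\<infinity>. std_phi t)"
proof -
  have "Qfun u = (LBINT t:{u<..}. std_phi t)"
    unfolding Qfun_def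
    by (rule set_integral_discrete_difference[where X="{u}"]) auto
  then show ?thesis by (simp add: interval_integral_Ioi)
qed

lemma total_std_phi: "(LBINT t=-\<infinity>..\<infinity>. std_phi t) = 1"
  by (simp add: interval_lebesgue_integral_def einterval_def set_lebesgue_integral_def integral_std_phi)

lemma Qfun_split: "Qfun a = (LBINT t=ereal a..ereal u. std_phi t) + Qfun u"
proof -
  have "(LBINT t=ereal a..ereal u. std_phi t) + (LBINT t=ereal u..\<infinity>. std_phi t)
      = (LBINT t=ereal a..\<infinity>. std_phi t)"
    by (rule interval_integral_sum) (rule interval_integrable_std_phi)
  then show ?thesis by (simp add: Qfun_Ioi)
qed

lemma Qfun_sym: "Qfun (- s) = 1 - Qfun s"
proof -
  have "Qfun (- s) = (LBINT t=ereal (-s)..\<infinity>. std_phi t)" by (rule Qfun_Ioi)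
  also have "\<dots> = (LBINT t=-\<infinity>..ereal s. std_phi (- t))"
    by (subst interval_integral_reflect) simp
  also have "\<dots> = (LBINT t=-\<infinity>..ereal s. std_phi t)"
    by (simp add: std_phi_even)
  finally have 1: "Qfun (- s) = (LBINT t=-\<infinity>..ereal s. std_phi t)" .
  have "(LBINT t=-\<infinity>..ereal s. std_phi t) + (LBINT t=ereal s..\<infinity>. std_phi t)
      = (LBINT t=-\<infinity>..\<infinity>. std_phi t)"
    by (rule interval_integral_sum) (rule interval_integrable_std_phi)
  then show ?thesis using 1 by (simp add: Qfun_Ioi total_std_phi)
qed

lemma DERIV_Qfun: "(Qfun has_real_derivative - std_phi x) (at x)"
proof -
  define a where "a = x - 1"
  have d: "((\<lambda>u. LBINT y=a..u. std_phi y) has_vector_derivative std_phi x) (at x within {a..x+1})"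
    by (rule interval_integral_FTC2) (auto simp: a_def cont_std_phi)
  have "at x within {a..x+1} = at x"
    by (rule at_within_Icc_at) (auto simp: a_def)
  with d have d2: "((\<lambda>u. LBINT y=a..u. std_phi y) has_real_derivative std_phi x) (at x)"
    by (simp add: has_real_derivative_iff_has_vector_derivative)
  have "((\<lambda>u. Qfun a - (LBINT y=a..u. std_phi y)) has_real_derivative 0 - std_phi x) (at x)"
    by (intro derivative_intros d2)
  then have "((\<lambda>u. Qfun a - (LBINT y=a..u. std_phi y)) has_real_derivative - std_phi x) (at x)"
    by simp
  then show ?thesis
    by (rule has_field_derivative_transform_within_open[where S=UNIV]) (simp_all, metis Qfun_split add_diff_cancel_left')
qed

lemma DERIV_Qfun_chain[derivative_intros]:
  "(f has_real_derivative f') (at x within S) \<Longrightarrow>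
   ((\<lambda>x. Qfun (f x)) has_real_derivative (- std_phi (f x) * f')) (at x within S)"
  using DERIV_chain2[OF DERIV_Qfun] by blast

lemma isCont_Qfun: "isCont Qfun x"
  using DERIV_Qfun DERIV_isCont by blast

lemma cont_Qfun: "continuous_on A Qfun"
  by (simp add: continuous_at_imp_continuous_on isCont_Qfun)


lemma std_phi_mono: "\<bar>t\<bar> \<le> a \<Longrightarrow> std_phi a \<le> std_phi t"
proof -
  assume "\<bar>t\<bar> \<le> a"
  then have "t\<^sup>2 \<le> a\<^sup>2"
    using power_mono[of "\<bar>t\<bar>" a 2] by simp
  then show ?thesis unfolding std_phi_def
    by (intro divide_right_mono) auto
qed

lemma Qfun_nonneg: "Qfun u \<ge> 0"
  unfolding Qfun_def set_lebesgue_integral_def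
  by (intro Bochner_Integration.integral_nonneg) (auto simp: std_phi_pos less_imp_le split: split_indicator)

lemma Qfun_lower: "Qfun u \<ge> std_phi (\<bar>u\<bar> + 1)"
proof -
  have si: "set_integrable lborel {u..u+1} std_phi"
    unfolding set_integrable_def by (rule integrable_mult_indicator) (auto simp: integrable_std_phi)
  have "(LBINT t=ereal u..ereal (u+1). std_phi t) = integral {u..u+1} std_phi"
    by (rule interval_integral_eq_integral) (use si in auto)
  also have "\<dots> \<ge> integral {u..u+1} (\<lambda>_. std_phi (\<bar>u\<bar> + 1))"
    by (rule integral_le) (auto intro!: integrable_continuous_interval cont_std_phi std_phi_mono)
  moreover have "integral {u..u+1} (\<lambda>_. std_phi (\<bar>u\<bar> + 1)) = std_phi (\<bar>u\<bar> + 1)"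
    by simp
  ultimately have "(LBINT t=ereal u..ereal (u+1). std_phi t) \<ge> std_phi (\<bar>u\<bar> + 1)" by linarith
  then show ?thesis using Qfun_split[of u "u+1"] Qfun_nonneg[of "u+1"] by linarith
qed

lemma Qfun_pos: "Qfun u > 0"
  using Qfun_lower[of u] std_phi_pos[of "\<bar>u\<bar> + 1"] by linarith

lemma Qfun_less1: "Qfun u < 1"
  using Qfun_pos[of "-u"] Qfun_sym[of u] by linarith

lemma xi_alt: "xi s = (std_phi s)\<^sup>2 / (Qfun s * Qfun (- s))"
  by (simp add: xi_def Qfun_sym)

lemma xi_even: "xi (- s) = xi s"
  by (simp add: xi_alt std_phi_even mult.commute)

lemma xi_nonneg: "xi s \<ge> 0"
  using Qfun_pos[of s] Qfun_pos[of "-s"] by (simp add: xi_alt)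

lemma cont_xi: "continuous_on A xi"
proof -
  have c2: "continuous_on A (\<lambda>s. Qfun (- s))"
    by (rule continuous_on_compose2[OF cont_Qfun]) (auto intro: continuous_intros)
  have nz: "Qfun s * Qfun (- s) \<noteq> 0" for s
    using Qfun_pos[of s] Qfun_pos[of "-s"] by simp
  show ?thesis unfolding xi_alt
    by (intro continuous_on_divide continuous_on_mult c2 cont_Qfun continuous_on_power cont_std_phi) (use nz in auto)
qed

lemma xi_meas[measurable]: "xi \<in> borel_measurable borel"
  by (rule borel_measurable_continuous_onI[OF cont_xi])

lemma xi_bound: "xi s \<le> exp 1"
proof -
  define m where "m = std_phi (\<bar>s\<bar> + 1)"
  have mpos: "m > 0" by (simp add: m_def std_phi_pos)
  have den: "Qfun s * Qfun (- s) \<ge> m / 2"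
  proof (cases "Qfun s \<ge> 1/2")
    case True
    have "Qfun (-s) \<ge> m" using Qfun_lower[of "-s"] by (simp add: m_def)
    have "m / 2 \<le> (1/2) * Qfun (-s)" using \<open>Qfun (-s) \<ge> m\<close> by simp
    also have "\<dots> \<le> Qfun s * Qfun (-s)"
      using True Qfun_pos[of "-s"] by (intro mult_right_mono) auto
    finally show ?thesis .
  next
    case False
    then have "Qfun (-s) \<ge> 1/2" using Qfun_sym[of s] by linarith
    moreover have "Qfun s \<ge> m" using Qfun_lower[of s] by (simp add: m_def)
    ultimately have "m / 2 \<le> Qfun s * (1/2)" by simp
    also have "\<dots> \<le> Qfun s * Qfun (-s)"
      using \<open>Qfun (-s) \<ge> 1/2\<close> Qfun_pos[of s] by (intro mult_left_mono) auto
    finally show ?thesis .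
  qed
  have "xi s \<le> (std_phi s)\<^sup>2 / (m / 2)"
    unfolding xi_alt using den mpos by (intro divide_left_mono) auto
  also have "\<dots> = 2 * (std_phi s)\<^sup>2 / m" by (simp add: field_simps)
  also have "\<dots> = 2 / sqrt (2 * pi) * exp (- s\<^sup>2 + (\<bar>s\<bar> + 1)\<^sup>2 / 2)"
  proof -
    have e1: "(std_phi s)\<^sup>2 = exp (- s\<^sup>2) / (2 * pi)"
      unfolding std_phi_def by (simp add: power_divide power2_eq_square exp_add[symmetric])
    have e2: "exp (- s\<^sup>2) / exp (- (\<bar>s\<bar> + 1)\<^sup>2 / 2) = exp (- s\<^sup>2 + (\<bar>s\<bar> + 1)\<^sup>2 / 2)"
      by (simp add: exp_diff[symmetric])
    have e3: "sqrt (2 * pi) * sqrt (2 * pi) = 2 * pi" by simp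
    have g: "2 * (E1 / (P * P)) / (E2 / P) = 2 / P * (E1 / E2)" if "P > 0" "E2 > 0" for P E1 E2 :: real
      using that by (simp add: field_simps)
    have "2 * (std_phi s)\<^sup>2 / m = 2 * (exp (- s\<^sup>2) / (sqrt (2 * pi) * sqrt (2 * pi))) / (exp (- (\<bar>s\<bar> + 1)\<^sup>2 / 2) / sqrt (2 * pi))"
      unfolding e1 m_def std_phi_def[of "\<bar>s\<bar> + 1"] e3 by simp
    also have "\<dots> = 2 / sqrt (2 * pi) * (exp (- s\<^sup>2) / exp (- (\<bar>s\<bar> + 1)\<^sup>2 / 2))"
      by (rule g) auto
    finally show ?thesis unfolding e2 .
  qed
  also have "\<dots> \<le> 1 * exp 1"
  proof (intro mult_mono)
    have "sqrt (2 * pi) \<ge> sqrt 4" using pi_gt3 by (intro real_sqrt_le_mono) linarith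
    then have "sqrt (2 * pi) \<ge> 2" by simp
    then show "2 / sqrt (2 * pi) \<le> 1" by simp
    have "- s\<^sup>2 + (\<bar>s\<bar> + 1)\<^sup>2 / 2 \<le> 1"
    proof -
      have "(\<bar>s\<bar> - 1)\<^sup>2 \<ge> 0" by simp
      then show ?thesis by (simp add: power2_eq_square algebra_simps abs_mult_self_eq)
    qed
    then show "exp (- s\<^sup>2 + (\<bar>s\<bar> + 1)\<^sup>2 / 2) \<le> exp 1" by simp
  qed auto
  finally show ?thesis by simp
qed

lemma abs_xi_bound: "\<bar>xi s\<bar> \<le> exp 1"
  using xi_bound xi_nonneg by simp


definition gdens :: "real^'n \<Rightarrow> real" where
  "gdens h = (\<Prod>i\<in>UNIV. std_phi (h $ i))"

lemma gdens_pos: "gdens h > 0"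
  unfolding gdens_def by (intro prod_pos) (auto simp: std_phi_pos)

lemma inner_axis_shift: "h \<bullet> (x + t *\<^sub>R axis i 1) = h \<bullet> x + t * (h $ i)"
  by (simp add: inner_add_right inner_axis)

lemma score_eq:
  "score x y h i = y * h $ i * std_phi (- y * (h \<bullet> x)) / Qfun (- y * (h \<bullet> x))"
proof -
  define P where "P = gdens h"
  have Ppos: "P > 0" by (simp add: P_def gdens_pos)
  have f: "(\<lambda>t. ln (dens (x + t *\<^sub>R axis i 1) y h)) = (\<lambda>t. ln (P * Qfun (- y * (h \<bullet> x + t * h $ i))))"
    by (simp add: dens_def inner_axis_shift P_def gdens_def)
  have "((\<lambda>t. ln (P * Qfun (- y * (h \<bullet> x + t * h $ i)))) has_real_derivative
        (P * (- std_phi (- y * (h \<bullet> x + 0 * h $ i)) * (- y * (0 + 1 * h $ i)))) / (P * Qfun (- y * (h \<bullet> x + 0 * h $ i)))) (at 0)"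
    by (rule derivative_eq_intros refl | simp add: Ppos Qfun_pos)+
  then have "deriv (\<lambda>t. ln (P * Qfun (- y * (h \<bullet> x + t * h $ i)))) 0 =
        (P * (- std_phi (- y * (h \<bullet> x + 0 * h $ i)) * (- y * (0 + 1 * h $ i)))) / (P * Qfun (- y * (h \<bullet> x + 0 * h $ i)))"
    by (rule DERIV_imp_deriv)
  then show ?thesis unfolding score_def f using Ppos by simp
qed

lemma fisher_integrand:
  "(\<Sum>y\<in>{-1, 1::real}. dens x y h * score x y h i * score x y h j) =
     gdens h * xi (h \<bullet> x) * h $ i * h $ j"
proof -
  define s where "s = h \<bullet> x"
  have q1: "Qfun s > 0" "Qfun (-s) > 0" by (simp_all add: Qfun_pos)
  have "(\<Sum>y\<in>{-1, 1::real}. dens x y h * score x y h i * score x y h j)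
     = gdens h * Qfun s * (h $ i * std_phi s / Qfun s) * (h $ j * std_phi s / Qfun s)
       + gdens h * Qfun (-s) * (h $ i * std_phi (-s) / Qfun (-s)) * (h $ j * std_phi (-s) / Qfun (-s))"
    by (simp add: score_eq dens_def gdens_def s_def)
  also have "\<dots> = gdens h * h $ i * h $ j * (std_phi s)\<^sup>2 * (1 / Qfun s + 1 / Qfun (-s))"
    using q1 by (simp add: std_phi_even field_simps power2_eq_square)
  also have "1 / Qfun s + 1 / Qfun (-s) = 1 / (Qfun s * Qfun (-s))"
    using q1 Qfun_sym[of s] by (simp add: field_simps)
  finally show ?thesis unfolding xi_alt s_def by (simp add: field_simps)
qed

lemma fisher_eq:
  "fisher x $ i $ j = (LINT h|lborel. gdens h * xi (h \<bullet> x) * h $ i * h $ j)"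
  unfolding fisher_def by (simp add: fisher_integrand)


interpretation lbprod: product_sigma_finite "\<lambda>_. lborel"
  by (simp add: product_sigma_finite_def lborel.sigma_finite_measure_axioms)

lemma vl_meas: "(\<lambda>\<omega>. \<chi> i. \<omega> i) \<in> measurable (Pi\<^sub>M UNIV (\<lambda>_::'n::finite. lborel)) (borel :: (real^'n) measure)"
proof (subst borel_measurable_euclidean_space, intro ballI)
  fix b :: "real^'n" assume "b \<in> Basis"
  then obtain j where b: "b = axis j 1" by (auto simp: Basis_vec_def)
  show "(\<lambda>\<omega>. (\<chi> i. \<omega> i) \<bullet> b) \<in> borel_measurable (Pi\<^sub>M UNIV (\<lambda>_. lborel))"
    unfolding b by (simp add: inner_axis)
qed

lemma lborel_vec: "(lborel :: (real^'n::finite) measure) = distr (Pi\<^sub>M UNIV (\<lambda>_. lborel)) borel (\<lambda>\<omega>. \<chi> i. \<omega> i)"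
proof (rule lborel_eqI)
  fix l u :: "real^'n"
  assume le: "\<And>b. b \<in> Basis \<Longrightarrow> l \<bullet> b \<le> u \<bullet> b"
  have le': "l $ i \<le> u $ i" for i
    using le[of "axis i 1"] by (auto simp: Basis_vec_def inner_axis)
  have pre: "(\<lambda>\<omega>. \<chi> i. \<omega> i) -` box l u \<inter> space (Pi\<^sub>M UNIV (\<lambda>_. lborel)) = Pi\<^sub>E UNIV (\<lambda>i. {l$i <..< u$i})"
    by (auto simp: mem_box_cart space_PiM PiE_def Pi_def extensional_def)
  have "emeasure (distr (Pi\<^sub>M UNIV (\<lambda>_. lborel)) borel (\<lambda>\<omega>. \<chi> i. \<omega> i)) (box l u)
      = emeasure (Pi\<^sub>M UNIV (\<lambda>_. lborel)) (Pi\<^sub>E UNIV (\<lambda>i. {l$i <..< u$i}))"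
    by (subst emeasure_distr[OF vl_meas]) (auto simp: pre)
  also have "\<dots> = (\<Prod>i\<in>UNIV. emeasure lborel {l$i <..< u$i})"
    by (rule lbprod.emeasure_PiM) auto
  also have "\<dots> = (\<Prod>i\<in>UNIV. ennreal (u$i - l$i))"
    using le' by simp
  also have "\<dots> = ennreal (\<Prod>i\<in>UNIV. u$i - l$i)"
    using le' by (simp add: prod_ennreal)
  also have "(\<Prod>i\<in>UNIV. u$i - l$i) = (\<Prod>b\<in>Basis. (u - l) \<bullet> b)"
    by (simp add: Basis_vec_def cart_eq_inner_axis axis_eq_axis prod.UNION_disjoint inner_diff_left)
  finally show "emeasure (distr (Pi\<^sub>M UNIV (\<lambda>_. lborel)) borel (\<lambda>\<omega>. \<chi> i. \<omega> i)) (box l u) = (\<Prod>b\<in>Basis. (u - l) \<bullet> b)" .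
qed simp


lemma integrable_prod_vec:
  fixes F :: "'n::finite \<Rightarrow> real \<Rightarrow> real"
  assumes "\<And>m. integrable lborel (F m)"
  shows "integrable lborel (\<lambda>k::real^'n. \<Prod>m\<in>UNIV. F m (k $ m))"
    and "(LINT k|lborel. (\<Prod>m\<in>UNIV. F m (k $ m))) = (\<Prod>m\<in>UNIV. LINT s|lborel. F m s)"
proof -
  have [measurable]: "F m \<in> borel_measurable borel" for m
    using assms[of m] by (simp add: borel_measurable_integrable)
  have meas: "(\<lambda>k::real^'n. \<Prod>m\<in>UNIV. F m (k $ m)) \<in> borel_measurable borel"
    by measurable
  have i: "integrable (Pi\<^sub>M UNIV (\<lambda>_. lborel)) (\<lambda>\<omega>. \<Prod>m\<in>UNIV. F m (\<omega> m))"
    by (rule lbprod.product_integrable_prod) (auto simp: assms)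
  show "integrable lborel (\<lambda>k::real^'n. \<Prod>m\<in>UNIV. F m (k $ m))"
    by (subst lborel_vec, subst integrable_distr_eq[OF vl_meas meas]) (simp add: i)
  have "(LINT k|lborel. (\<Prod>m\<in>UNIV. F m (k $ m))) =
      (LINT \<omega>|Pi\<^sub>M UNIV (\<lambda>_. lborel). (\<Prod>m\<in>UNIV. F m (\<omega> m)))"
    by (subst lborel_vec, subst integral_distr[OF vl_meas meas]) simp
  also have "\<dots> = (\<Prod>m\<in>UNIV. LINT s|lborel. F m s)"
    by (rule lbprod.product_integral_prod) (auto simp: assms)
  finally show "(LINT k|lborel. (\<Prod>m\<in>UNIV. F m (k $ m))) = (\<Prod>m\<in>UNIV. LINT s|lborel. F m s)" .
qed


definition peel :: "'n::finite \<Rightarrow> real \<Rightarrow> real^'n \<Rightarrow> real^'n \<Rightarrow> real^'n" where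
  "peel p \<sigma> w h = h + ((\<sigma> - 1) * (h \<bullet> axis p 1) + w \<bullet> h) *\<^sub>R axis p 1"

lemma peel_meas[measurable]: "peel p \<sigma> w \<in> borel_measurable borel"
  unfolding peel_def by (intro borel_measurable_continuous_onI continuous_intros)

lemma peel_nth: "peel p \<sigma> w h $ i = (if i = p then \<sigma> * h $ p + w \<bullet> h else h $ i)"
  by (simp add: peel_def inner_axis) (simp add: axis_def algebra_simps)

definition vl :: "('n::finite \<Rightarrow> real) \<Rightarrow> real^'n" where
  "vl \<omega> = (\<chi> i. \<omega> i)"

lemma vl_meas'[measurable]: "vl \<in> measurable (Pi\<^sub>M UNIV (\<lambda>_::'n::finite. lborel)) borel"
  unfolding vl_def[abs_def] by (rule vl_meas)

lemma lborel_vec': "(lborel :: (real^'n::finite) measure) = distr (Pi\<^sub>M UNIV (\<lambda>_. lborel)) borel vl"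
  unfolding vl_def[abs_def] by (rule lborel_vec)

lemma vl_upd: "vl ((fun_upd \<omega> p (y))) = (\<chi> i. if i = p then 0 else \<omega> i) + y *\<^sub>R axis p 1"
  by (simp add: vl_def vec_eq_iff axis_def)

lemma vl_upd_meas[measurable]: "(\<lambda>y. vl ((fun_upd \<omega> p (y)))) \<in> borel_measurable borel"
  unfolding vl_upd by (intro borel_measurable_continuous_onI continuous_intros)

lemma inner_vl_upd: "w $ p = 0 \<Longrightarrow> w \<bullet> vl ((fun_upd \<omega> p (y))) = w \<bullet> vl \<omega>"
  unfolding inner_vec_def vl_def by (intro sum.cong) auto

lemma peel_vl_upd:
  "w $ p = 0 \<Longrightarrow> peel p \<sigma> w (vl ((fun_upd \<omega> p (y)))) = vl ((fun_upd \<omega> p (\<sigma> * y + w \<bullet> vl \<omega>)))"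
  by (simp add: vec_eq_iff peel_nth inner_vl_upd) (simp add: vl_def)

lemma peel_nn:
  fixes p :: "'n::finite"
  assumes \<sigma>: "\<sigma> = 1 \<or> \<sigma> = -1" and w: "w $ p = 0" and f[measurable]: "f \<in> borel_measurable borel"
  shows "(\<integral>\<^sup>+h. f (peel p \<sigma> w h) \<partial>lborel) = (\<integral>\<^sup>+h. f h \<partial>lborel)"
proof -
  define J where "J = UNIV - {p}"
  have U: "insert p J = UNIV" "p \<notin> J" "finite J" by (auto simp: J_def)
  have \<sigma>0: "\<sigma> \<noteq> 0" "\<bar>\<sigma>\<bar> = 1" using \<sigma> by auto
  have m1: "(\<lambda>\<omega>. f (peel p \<sigma> w (vl \<omega>))) \<in> borel_measurable (Pi\<^sub>M (insert p J) (\<lambda>_. lborel))"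
    unfolding U by measurable
  have m2: "(\<lambda>\<omega>. f (vl \<omega>)) \<in> borel_measurable (Pi\<^sub>M (insert p J) (\<lambda>_. lborel))"
    unfolding U by measurable
  have inner: "(\<integral>\<^sup>+y. f (vl ((fun_upd \<omega> p (\<sigma> * y + c)))) \<partial>lborel) = (\<integral>\<^sup>+y. f (vl ((fun_upd \<omega> p (y)))) \<partial>lborel)" for \<omega> c
    using nn_integral_real_affine[of "\<lambda>y. f (vl ((fun_upd \<omega> p (y))))" \<sigma> c] \<sigma>0
    by (simp add: add.commute)
  have "(\<integral>\<^sup>+h. f (peel p \<sigma> w h) \<partial>lborel) = (\<integral>\<^sup>+\<omega>. f (peel p \<sigma> w (vl \<omega>)) \<partial>Pi\<^sub>M (insert p J) (\<lambda>_. lborel))"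
    by (subst lborel_vec', subst nn_integral_distr) (auto simp: U)
  also have "\<dots> = (\<integral>\<^sup>+\<omega>. (\<integral>\<^sup>+y. f (peel p \<sigma> w (vl ((fun_upd \<omega> p (y))))) \<partial>lborel) \<partial>Pi\<^sub>M J (\<lambda>_. lborel))"
    by (rule lbprod.product_nn_integral_insert[OF U(3) U(2) m1])
  also have "\<dots> = (\<integral>\<^sup>+\<omega>. (\<integral>\<^sup>+y. f (vl ((fun_upd \<omega> p (y)))) \<partial>lborel) \<partial>Pi\<^sub>M J (\<lambda>_. lborel))"
    by (simp add: peel_vl_upd[OF w] inner)
  also have "\<dots> = (\<integral>\<^sup>+\<omega>. f (vl \<omega>) \<partial>Pi\<^sub>M (insert p J) (\<lambda>_. lborel))"
    by (rule lbprod.product_nn_integral_insert[OF U(3) U(2) m2, symmetric])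
  also have "\<dots> = (\<integral>\<^sup>+h. f h \<partial>lborel)"
    by (subst lborel_vec', subst nn_integral_distr) (auto simp: U)
  finally show ?thesis .
qed

definition mpres :: "(real^'n::finite \<Rightarrow> real^'n) \<Rightarrow> bool" where
  "mpres T \<longleftrightarrow> T \<in> borel_measurable borel \<and> distr lborel borel T = lborel"

lemma mpres_peel:
  assumes "\<sigma> = 1 \<or> \<sigma> = -1" "w $ p = 0"
  shows "mpres (peel p \<sigma> w)"
  unfolding mpres_def
proof (intro conjI peel_meas measure_eqI)
  show "sets (distr lborel borel (peel p \<sigma> w)) = sets lborel" by simp
  fix A assume A: "A \<in> sets (distr lborel borel (peel p \<sigma> w))"
  then have A': "A \<in> sets borel" by simp
  have "emeasure (distr lborel borel (peel p \<sigma> w)) A = emeasure lborel (peel p \<sigma> w -` A)"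
    by (subst emeasure_distr) (use A' in auto)
  also have "\<dots> = (\<integral>\<^sup>+h. indicator A (peel p \<sigma> w h) \<partial>lborel)"
    by (subst nn_integral_indicator[symmetric]) (use A' in \<open>auto intro!: nn_integral_cong measurable_sets_borel[OF peel_meas] split: split_indicator\<close>)
  also have "\<dots> = (\<integral>\<^sup>+h. indicator A h \<partial>lborel)"
    by (rule peel_nn[OF assms]) (use A' in auto)
  also have "\<dots> = emeasure lborel A"
    using A' by simp
  finally show "emeasure (distr lborel borel (peel p \<sigma> w)) A = emeasure lborel A" .
qed

lemma mpres_comp: "mpres f \<Longrightarrow> mpres g \<Longrightarrow> mpres (g \<circ> f)"
proof -
  assume f: "mpres f" and g: "mpres g"
  have fm: "f \<in> measurable lborel borel" using f unfolding mpres_def by simp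
  have gm: "g \<in> measurable borel borel" using g unfolding mpres_def by simp
  have "distr lborel borel (g \<circ> f) = distr (distr lborel borel f) borel g"
    by (rule distr_distr[OF gm fm, symmetric])
  also have "\<dots> = lborel" using f g unfolding mpres_def by simp
  finally show ?thesis unfolding mpres_def using f g unfolding mpres_def
    using measurable_comp[of f borel borel g borel] by (simp add: comp_def)
qed

lemma mpres_id: "mpres (\<lambda>x. x)"
  unfolding mpres_def by (simp add: distr_id2)


lemma mpres_shear:
  assumes "p \<noteq> q"
  shows "mpres (\<lambda>h::real^'n::finite. \<chi> i. if i = p then h $ p + t * h $ q else h $ i)"
proof -
  have "(\<lambda>h::real^'n. \<chi> i. if i = p then h $ p + t * h $ q else h $ i) = peel p 1 (t *\<^sub>R axis q 1)"
    by (rule ext) (simp add: vec_eq_iff peel_nth inner_axis inner_commute)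
  moreover have "mpres (peel p 1 (t *\<^sub>R axis q (1::real)) :: real^'n \<Rightarrow> _)"
    by (rule mpres_peel) (use assms in \<open>auto simp: axis_def\<close>)
  ultimately show ?thesis by simp
qed

lemma mpres_refl:
  shows "mpres (\<lambda>h::real^'n::finite. \<chi> i. if i = p then - h $ p else h $ i)"
proof -
  have "(\<lambda>h::real^'n. \<chi> i. if i = p then - h $ p else h $ i) = peel p (-1) 0"
    by (rule ext) (simp add: vec_eq_iff peel_nth)
  moreover have "mpres (peel p (-1) 0 :: real^'n \<Rightarrow> _)"
    by (rule mpres_peel) auto
  ultimately show ?thesis by simp
qed

definition givens :: "'n::finite \<Rightarrow> 'n \<Rightarrow> real \<Rightarrow> real \<Rightarrow> real^'n \<Rightarrow> real^'n" where
  "givens p q c s h = (\<chi> i. if i = p then c * h $ p - s * h $ q else if i = q then s * h $ p + c * h $ q else h $ i)"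

lemma mpres_givens:
  fixes p q :: "'n::finite"
  assumes pq: "p \<noteq> q" and cs: "c\<^sup>2 + s\<^sup>2 = 1"
  shows "mpres (givens p q c s)"
proof (cases "s = 0")
  case False
  define \<alpha> where "\<alpha> = (c - 1) / s"
  define T1 where "T1 = (\<lambda>h::real^'n. \<chi> i. if i = p then h $ p + \<alpha> * h $ q else h $ i)"
  define T2 where "T2 = (\<lambda>h::real^'n. \<chi> i. if i = q then h $ q + s * h $ p else h $ i)"
  have a1: "1 + \<alpha> * s = c" using False by (simp add: \<alpha>_def field_simps)
  have a2: "2 * \<alpha> + \<alpha> * \<alpha> * s = - s"
  proof -
    have "2 * \<alpha> + \<alpha> * \<alpha> * s = \<alpha> * (1 + c)" by (simp add: a1[symmetric] algebra_simps)
    also have "\<dots> = (c * c - 1) / s" by (simp add: \<alpha>_def field_simps)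
    also have "c * c - 1 = - s * s" using cs by (simp add: power2_eq_square algebra_simps)
    finally show ?thesis using False by simp
  qed
  have eq: "givens p q c s = T1 \<circ> T2 \<circ> T1"
  proof (rule ext)
    fix h :: "real^'n"
    have "(T1 \<circ> T2 \<circ> T1) h $ p = (1 + \<alpha> * s) * h $ p + (2 * \<alpha> + \<alpha> * \<alpha> * s) * h $ q"
      using pq by (simp add: T1_def T2_def algebra_simps)
    moreover have "(T1 \<circ> T2 \<circ> T1) h $ q = s * h $ p + (1 + \<alpha> * s) * h $ q"
      using pq by (simp add: T1_def T2_def algebra_simps)
    ultimately show "givens p q c s h = (T1 \<circ> T2 \<circ> T1) h"
      unfolding a1 a2 using pq by (simp add: vec_eq_iff givens_def T1_def T2_def)
  qed
  have m1: "mpres T1" unfolding T1_def by (rule mpres_shear[OF pq])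
  have m2: "mpres T2" unfolding T2_def using mpres_shear[of q p s] pq by simp
  show ?thesis unfolding eq by (intro mpres_comp m1 m2)
next
  case True
  then have "c = 1 \<or> c = -1" using cs by (simp add: power2_eq_1_iff)
  then show ?thesis
  proof
    assume "c = 1"
    then have "givens p q c s = (\<lambda>x. x)" using True by (auto simp: givens_def vec_eq_iff)
    then show ?thesis by (simp add: mpres_id)
  next
    assume c: "c = -1"
    define R1 where "R1 = (\<lambda>h::real^'n. \<chi> i. if i = p then - h $ p else h $ i)"
    define R2 where "R2 = (\<lambda>h::real^'n. \<chi> i. if i = q then - h $ q else h $ i)"
    have "givens p q c s = R1 \<circ> R2" using True c pq
      by (auto simp: givens_def vec_eq_iff R1_def R2_def)
    moreover have "mpres (R1 \<circ> R2)" unfolding R1_def R2_def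
      by (intro mpres_comp mpres_refl)
    ultimately show ?thesis by simp
  qed
qed

lemma inner_split2:
  fixes v w :: "real^'n::finite"
  assumes "p \<noteq> q"
  shows "v \<bullet> w = v $ p * w $ p + v $ q * w $ q + (\<Sum>i\<in>UNIV - {p, q}. v $ i * w $ i)"
proof -
  have "v \<bullet> w = (\<Sum>i\<in>UNIV. v $ i * w $ i)" by (simp add: inner_vec_def)
  also have "\<dots> = v $ p * w $ p + (\<Sum>i\<in>UNIV - {p}. v $ i * w $ i)"
    by (subst sum.remove[of _ p]) auto
  also have "(\<Sum>i\<in>UNIV - {p}. v $ i * w $ i) = v $ q * w $ q + (\<Sum>i\<in>UNIV - {p} - {q}. v $ i * w $ i)"
    using assms by (subst sum.remove[of _ q]) auto
  also have "UNIV - {p} - {q} = UNIV - {p, q}" by auto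
  finally show ?thesis by simp
qed

lemma inner_split1:
  fixes v w :: "real^'n::finite"
  shows "v \<bullet> w = v $ p * w $ p + (\<Sum>i\<in>UNIV - {p}. v $ i * w $ i)"
proof -
  have "v \<bullet> w = (\<Sum>i\<in>UNIV. v $ i * w $ i)" by (simp add: inner_vec_def)
  also have "\<dots> = v $ p * w $ p + (\<Sum>i\<in>UNIV - {p}. v $ i * w $ i)"
    by (subst sum.remove[of _ p]) auto
  finally show ?thesis .
qed

lemma linear_givens: "linear (givens p q c s)"
  by (rule linearI) (auto simp: givens_def vec_eq_iff algebra_simps)

lemma orth_givens:
  assumes pq: "p \<noteq> q" and cs: "c\<^sup>2 + s\<^sup>2 = 1"
  shows "orthogonal_transformation (givens p q c s)"
  unfolding orthogonal_transformation_def
proof (intro conjI allI linear_givens)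
  fix v w :: "real^'a"
  have rest: "(\<Sum>i\<in>UNIV - {p, q}. givens p q c s v $ i * givens p q c s w $ i) = (\<Sum>i\<in>UNIV - {p, q}. v $ i * w $ i)"
    by (intro sum.cong) (auto simp: givens_def)
  have "(c * v $ p - s * v $ q) * (c * w $ p - s * w $ q) + (s * v $ p + c * v $ q) * (s * w $ p + c * w $ q)
      = (c\<^sup>2 + s\<^sup>2) * (v $ p * w $ p) + (c\<^sup>2 + s\<^sup>2) * (v $ q * w $ q)"
    by (simp add: power2_eq_square algebra_simps)
  then show "givens p q c s v \<bullet> givens p q c s w = v \<bullet> w"
    using pq cs by (simp add: inner_split2[OF pq] rest) (simp add: givens_def)
qed

lemma orth_refl:
  "orthogonal_transformation (\<lambda>h::real^'n::finite. \<chi> i. if i = p then - h $ p else h $ i)"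
  unfolding orthogonal_transformation_def
proof (intro conjI allI)
  show "linear (\<lambda>h::real^'n::finite. \<chi> i. if i = p then - h $ p else h $ i)"
    by (rule linearI) (auto simp: vec_eq_iff)
  fix v w :: "real^'n"
  have rest: "(\<Sum>i\<in>UNIV - {p}. (\<chi> i. if i = p then - v $ p else v $ i) $ i * (\<chi> i. if i = p then - w $ p else w $ i) $ i)
     = (\<Sum>i\<in>UNIV - {p}. v $ i * w $ i)"
    by (intro sum.cong) auto
  show "(\<chi> i. if i = p then - v $ p else v $ i) \<bullet> (\<chi> i. if i = p then - w $ p else w $ i) = v \<bullet> w"
    by (simp add: inner_split1[of _ _ p] rest)
qed

definition good :: "(real^'n::finite \<Rightarrow> real^'n) \<Rightarrow> bool" where
  "good f \<longleftrightarrow> orthogonal_transformation f \<and> mpres f"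

lemma good_comp: "good f \<Longrightarrow> good g \<Longrightarrow> good (g \<circ> f)"
  unfolding good_def by (simp add: orthogonal_transformation_compose mpres_comp)

lemma good_exists_aux:
  fixes i0 :: "'n::finite"
  assumes "finite K" "i0 \<notin> K"
  shows "\<forall>x::real^'n. (\<forall>k. k \<notin> K \<longrightarrow> k \<noteq> i0 \<longrightarrow> x $ k = 0) \<longrightarrow> (\<exists>f. good f \<and> f (norm x *\<^sub>R axis i0 1) = x)"
  using assms
proof (induction K rule: finite_induct)
  case empty
  show ?case
  proof (intro allI impI)
    fix x :: "real^'n"
    assume z: "\<forall>k. k \<notin> {} \<longrightarrow> k \<noteq> i0 \<longrightarrow> x $ k = 0"
    have xe: "x = (x $ i0) *\<^sub>R axis i0 1"
      using z by (auto simp: vec_eq_iff axis_def)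
    have nx: "norm x = \<bar>x $ i0\<bar>"
      by (subst xe) simp
    show "\<exists>f. good f \<and> f (norm x *\<^sub>R axis i0 1) = x"
    proof (cases "x $ i0 \<ge> 0")
      case True
      then have "(\<lambda>y. y) (norm x *\<^sub>R axis i0 1) = x" using nx xe by simp
      moreover have "good (\<lambda>y::real^'n. y)" by (simp add: good_def mpres_id)
      ultimately show ?thesis by blast
    next
      case False
      define R where "R = (\<lambda>h::real^'n. \<chi> i. if i = i0 then - h $ i0 else h $ i)"
      have "good R" unfolding good_def R_def by (simp add: orth_refl mpres_refl)
      moreover have "R (norm x *\<^sub>R axis i0 1) = x"
        using False nx z by (auto simp: R_def vec_eq_iff axis_def)
      ultimately show ?thesis by blast
    qed
  qed
next
  case (insert k K)
  have ki: "k \<noteq> i0" "i0 \<notin> K" using insert.prems by auto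
  show ?case
  proof (intro allI impI)
    fix x :: "real^'n"
    assume z: "\<forall>j. j \<notin> insert k K \<longrightarrow> j \<noteq> i0 \<longrightarrow> x $ j = 0"
    define a where "a = x $ i0"
    define b where "b = x $ k"
    define \<rho> where "\<rho> = sqrt (a\<^sup>2 + b\<^sup>2)"
    define x' where "x' = (\<chi> i. if i = i0 then \<rho> else if i = k then 0 else x $ i)"
    have z': "\<forall>j. j \<notin> K \<longrightarrow> j \<noteq> i0 \<longrightarrow> x' $ j = 0"
      using z by (auto simp: x'_def)
    obtain f' where f': "good f'" "f' (norm x' *\<^sub>R axis i0 1) = x'"
      using insert.IH[OF ki(2)] z' by blast
    show "\<exists>f. good f \<and> f (norm x *\<^sub>R axis i0 1) = x"
    proof (cases "\<rho> = 0")
      case True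
      then have "a = 0" "b = 0" unfolding \<rho>_def
        by (simp_all add: sum_power2_eq_zero_iff)
      then have "x' = x" using True ki by (auto simp: x'_def vec_eq_iff a_def b_def)
      then show ?thesis using f' by auto
    next
      case False
      have "\<rho> \<ge> 0" unfolding \<rho>_def by simp
      then have \<rho>pos: "\<rho> > 0" using False by linarith
      have r2: "\<rho>\<^sup>2 = a\<^sup>2 + b\<^sup>2" unfolding \<rho>_def by simp
      have "(a / \<rho>)\<^sup>2 + (b / \<rho>)\<^sup>2 = (a\<^sup>2 + b\<^sup>2) / \<rho>\<^sup>2"
        by (simp add: power_divide add_divide_distrib)
      also have "\<dots> = \<rho>\<^sup>2 / \<rho>\<^sup>2" by (simp only: r2)
      also have "\<dots> = 1" using False by simp
      finally have cs: "(a / \<rho>)\<^sup>2 + (b / \<rho>)\<^sup>2 = 1" .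
      define G where "G = givens i0 k (a / \<rho>) (b / \<rho>)"
      have gG: "good G" unfolding good_def G_def
        using ki cs by (simp add: orth_givens mpres_givens)
      have Gx: "G x' = x"
        using ki False by (auto simp: G_def givens_def x'_def vec_eq_iff a_def b_def)
      have "norm x = norm x'"
        using gG Gx unfolding good_def by (metis orthogonal_transformation_norm)
      then have "(G \<circ> f') (norm x *\<^sub>R axis i0 1) = x" using f' Gx by simp
      moreover have "good (G \<circ> f')" by (rule good_comp[OF f'(1) gG])
      ultimately show ?thesis by blast
    qed
  qed
qed

lemma good_exists:
  fixes i0 :: "'n::finite" and x :: "real^'n"
  obtains f where "good f" "f (norm x *\<^sub>R axis i0 1) = x"
  using good_exists_aux[of "UNIV - {i0}" i0] by auto


lemma int_phi_s: "(LINT s|lborel. std_phi s * s) = 0"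
  using integral_std_normal_moment_odd[of 0] by (simp add: std_phi_eq)

lemma int_phi_ss: "(LINT s|lborel. std_phi s * s * s) = 1"
  using integral_std_normal_moment_even[of 1] by (simp add: std_phi_eq power2_eq_square mult.assoc)

lemma integrable_phi_s2: "integrable lborel (\<lambda>s. std_phi s * s\<^sup>2)"
  using integrable_std_normal_moment[of 2] by (simp add: std_phi_eq)

definition Ff :: "real \<Rightarrow> 'n \<Rightarrow> 'n \<Rightarrow> 'n \<Rightarrow> 'n \<Rightarrow> real \<Rightarrow> real" where
  "Ff c i0 a b m s = std_phi s * (if m = i0 then xi (c * s) else 1) * (if m = a then s else 1) * (if m = b then s else 1)"

lemma Ff_integrable: "integrable lborel (Ff c i0 a b m)"
proof (rule Bochner_Integration.integrable_bound)
  show "integrable lborel (\<lambda>s. exp 1 * (std_phi s + std_phi s * s\<^sup>2))"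
    by (intro integrable_mult_right Bochner_Integration.integrable_add integrable_std_phi integrable_phi_s2)
  show "Ff c i0 a b m \<in> borel_measurable lborel"
    unfolding Ff_def by measurable
  show "AE s in lborel. norm (Ff c i0 a b m s) \<le> norm (exp 1 * (std_phi s + std_phi s * s\<^sup>2))"
  proof (intro AE_I2)
    fix s :: real
    have s1: "\<bar>s\<bar> \<le> 1 + s\<^sup>2"
    proof -
      have "0 \<le> (\<bar>s\<bar> - 1)\<^sup>2" by simp
      then have "0 \<le> \<bar>s\<bar> * \<bar>s\<bar> - 2 * \<bar>s\<bar> + 1" by (simp add: power2_eq_square algebra_simps)
      then show ?thesis by (simp add: power2_eq_square abs_mult_self_eq)
    qed
    have s2: "0 \<le> s\<^sup>2" by simp
    have u: "\<bar>(if m = a then s else 1) * (if m = b then s else 1)\<bar> \<le> 1 + s\<^sup>2"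
      using s1 s2 by (cases "m = a"; cases "m = b") (auto simp: abs_mult power2_eq_square abs_mult_self_eq)
    have w: "\<bar>if m = i0 then xi (c * s) else 1\<bar> \<le> exp 1"
      using abs_xi_bound[of "c * s"] by (auto simp: one_le_exp_iff)
    have "\<bar>Ff c i0 a b m s\<bar> = std_phi s * (\<bar>if m = i0 then xi (c * s) else 1\<bar> *
          \<bar>(if m = a then s else 1) * (if m = b then s else 1)\<bar>)"
      unfolding Ff_def using std_phi_pos[of s] by (simp add: abs_mult mult.assoc)
    also have "\<dots> \<le> std_phi s * (exp 1 * (1 + s\<^sup>2))"
      using std_phi_pos[of s] u w by (intro mult_left_mono mult_mono) auto
    also have "\<dots> = exp 1 * (std_phi s + std_phi s * s\<^sup>2)" by (simp add: algebra_simps)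
    finally show "norm (Ff c i0 a b m s) \<le> norm (exp 1 * (std_phi s + std_phi s * s\<^sup>2))"
      using std_phi_pos[of s] by simp
  qed
qed

lemma prod_Ff: "(\<Prod>m\<in>UNIV. Ff c i0 a b m (k $ m)) = gdens k * xi (c * k $ i0) * k $ a * k $ b"
  unfolding Ff_def gdens_def by (simp add: prod.distrib)

definition Dd :: "real \<Rightarrow> 'n \<Rightarrow> 'n \<Rightarrow> 'n \<Rightarrow> real" where
  "Dd c i0 a b = (if a = b then (if a = i0 then zeta 2 c else zeta 0 c) else 0)"

lemma zeta0_eq: "zeta 0 c = (LINT s|lborel. std_phi s * xi (c * s))"
  by (simp add: zeta_def)

lemma zeta2_eq: "zeta 2 c = (LINT s|lborel. std_phi s * xi (c * s) * s * s)"
  unfolding zeta_def by (intro Bochner_Integration.integral_cong) (auto simp: power2_eq_square)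

lemma Nint:
  fixes i0 a b :: "'n::finite"
  shows "integrable lborel (\<lambda>k::real^'n. gdens k * xi (c * k $ i0) * k $ a * k $ b)"
    and "(LINT k|lborel. gdens k * xi (c * k $ i0) * k $ a * k $ b) = Dd c i0 a b"
proof -
  show "integrable lborel (\<lambda>k::real^'n. gdens k * xi (c * k $ i0) * k $ a * k $ b)"
    using integrable_prod_vec(1)[of "Ff c i0 a b", OF Ff_integrable] by (simp add: prod_Ff)
  have "(LINT k|lborel. gdens k * xi (c * k $ i0) * k $ a * k $ b) = (\<Prod>m\<in>UNIV. LINT s|lborel. Ff c i0 a b m s)"
    using integrable_prod_vec(2)[of "Ff c i0 a b", OF Ff_integrable] by (simp add: prod_Ff)
  also have "\<dots> = Dd c i0 a b"
  proof -
    define v where "v m = (LINT s|lborel. Ff c i0 a b m s)" for m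
    have P: "(\<Prod>m\<in>UNIV. v m) = v i0 * (\<Prod>m\<in>UNIV - {i0}. v m)"
      by (subst prod.remove[of _ i0]) auto
    have other: "v m = 1" if "m \<noteq> i0" "m \<noteq> a" "m \<noteq> b" for m
      using that by (simp add: v_def Ff_def integral_std_phi)
    have "prod v UNIV = Dd c i0 a b"
    proof (cases "a = b")
      case True
      have ones: "v m = 1" if "m \<noteq> i0" for m
      proof (cases "m = a")
        case True
        then show ?thesis using that \<open>a = b\<close> by (simp add: v_def Ff_def int_phi_ss)
      next
        case False
        then show ?thesis using that \<open>a = b\<close> other by simp
      qed
      have r: "(\<Prod>m\<in>UNIV - {i0}. v m) = 1" by (intro prod.neutral) (auto simp: ones)
      show ?thesis
      proof (cases "a = i0")
        case True
        have "v i0 = zeta 2 c" using True \<open>a = b\<close> by (simp add: v_def Ff_def zeta2_eq mult.assoc)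
        then show ?thesis using P r True \<open>a = b\<close> by (simp add: Dd_def)
      next
        case False
        have "v i0 = zeta 0 c" using False \<open>a = b\<close> by (simp add: v_def Ff_def zeta0_eq)
        then show ?thesis using P r False \<open>a = b\<close> by (simp add: Dd_def)
      qed
    next
      case False
      define d where "d = (if a = i0 then b else a)"
      have d: "d \<noteq> i0" "d = a \<or> d = b" "d \<noteq> a \<or> d \<noteq> b" using False by (auto simp: d_def)
      have "v d = 0"
        using d by (auto simp: v_def Ff_def int_phi_s mult.commute[of _ "std_phi _"])
      then have "(\<Prod>m\<in>UNIV. v m) = 0" by (intro prod_zero) auto
      then show ?thesis using False by (simp add: Dd_def)
    qed
    then show ?thesis by (simp add: v_def)
  qed
  finally show "(LINT k|lborel. gdens k * xi (c * k $ i0) * k $ a * k $ b) = Dd c i0 a b" .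
qed


lemma gdens_meas[measurable]: "gdens \<in> borel_measurable borel"
  unfolding gdens_def[abs_def] by measurable

lemma gdens_norm: "gdens (h::real^'n::finite) = exp (- (norm h)\<^sup>2 / 2) / sqrt (2 * pi) ^ CARD('n)"
proof -
  have "gdens h = (\<Prod>i\<in>UNIV. exp (- (h $ i)\<^sup>2 / 2)) / (\<Prod>i\<in>(UNIV::'n set). sqrt (2 * pi))"
    unfolding gdens_def std_phi_def by (rule prod_dividef)
  also have "(\<Prod>i\<in>UNIV. exp (- (h $ i)\<^sup>2 / 2)) = exp (\<Sum>i\<in>UNIV. - (h $ i)\<^sup>2 / 2)"
    by (simp add: exp_sum)
  also have "(\<Sum>i\<in>UNIV. - (h $ i)\<^sup>2 / 2) = - (\<Sum>i\<in>UNIV. h $ i * h $ i) / 2"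
    by (simp add: sum_divide_distrib sum_negf power2_eq_square)
  also have "(\<Sum>i\<in>UNIV. h $ i * h $ i) = (norm h)\<^sup>2"
    by (simp add: power2_norm_eq_inner inner_vec_def)
  finally show ?thesis by simp
qed

lemma fisher_entry:
  fixes x :: "real^'n::finite" and i0 :: 'n
  assumes g: "good f" and fx: "f (norm x *\<^sub>R axis i0 1) = x"
  shows "fisher x $ i $ j = (\<Sum>a\<in>UNIV. \<Sum>b\<in>UNIV. matrix f $ i $ a * matrix f $ j $ b * Dd (norm x) i0 a b)"
proof -
  define c where "c = norm x"
  have ot: "orthogonal_transformation f" and mp: "mpres f" using g by (auto simp: good_def)
  have lin: "linear f" using ot by (simp add: orthogonal_transformation_linear)
  have fm: "f \<in> measurable lborel borel" and dist: "distr lborel borel f = lborel"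
    using mp by (auto simp: mpres_def)
  have comp: "f k $ i = (\<Sum>a\<in>UNIV. matrix f $ i $ a * k $ a)" for k i
  proof -
    have "f k = matrix f *v k" using fun_cong[OF matrix_vector_mul(2)[OF lin], of k] by simp
    then show ?thesis by (simp add: matrix_vector_mult_def)
  qed
  have inn: "f k \<bullet> x = c * k $ i0" for k
  proof -
    have "f k \<bullet> x = f k \<bullet> f (c *\<^sub>R axis i0 1)" using fx by (simp add: c_def)
    also have "\<dots> = k \<bullet> (c *\<^sub>R axis i0 1)" using ot by (simp add: orthogonal_transformation_def)
    finally show ?thesis by (simp add: inner_axis)
  qed
  have gn: "gdens (f k) = gdens k" for k
    using ot by (simp add: gdens_norm orthogonal_transformation_norm)
  have "fisher x $ i $ j = (LINT h|lborel. gdens h * xi (h \<bullet> x) * h $ i * h $ j)"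
    by (rule fisher_eq)
  also have "\<dots> = (LINT h|distr lborel borel f. gdens h * xi (h \<bullet> x) * h $ i * h $ j)"
    by (simp add: dist)
  also have "\<dots> = (LINT k|lborel. gdens (f k) * xi (f k \<bullet> x) * f k $ i * f k $ j)"
    by (rule integral_distr[OF fm]) measurable
  also have "\<dots> = (LINT k|lborel. (\<Sum>a\<in>UNIV. \<Sum>b\<in>UNIV. matrix f $ i $ a * matrix f $ j $ b *
                    (gdens k * xi (c * k $ i0) * k $ a * k $ b)))"
    by (intro Bochner_Integration.integral_cong refl)
       (simp add: gn inn comp sum_distrib_left sum_distrib_right algebra_simps)
  also have "\<dots> = (\<Sum>a\<in>UNIV. \<Sum>b\<in>UNIV. matrix f $ i $ a * matrix f $ j $ b *
                    (LINT k|lborel. gdens k * xi (c * k $ i0) * k $ a * k $ b))"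
    by (simp add: Bochner_Integration.integral_sum Nint(1) integrable_mult_right)
  also have "\<dots> = (\<Sum>a\<in>UNIV. \<Sum>b\<in>UNIV. matrix f $ i $ a * matrix f $ j $ b * Dd c i0 a b)"
    by (simp add: Nint(2))
  finally show ?thesis by (simp add: c_def)
qed

theorem lemma5:
  fixes x :: "real^'n"
  shows "det (fisher x) = zeta 0 (norm x) ^ (CARD('n) - 1) * zeta 2 (norm x)"
proof -
  obtain i0 :: 'n where True by blast
  obtain f where g: "good f" and fx: "f (norm x *\<^sub>R axis i0 1) = x"
    using good_exists by blast
  define Q where "Q = matrix f"
  define D where "D = (\<chi> a b. Dd (norm x) i0 a b)"
  have ot: "orthogonal_transformation f" using g by (simp add: good_def)
  have oQ: "orthogonal_matrix Q" using ot unfolding Q_def by (simp add: orthogonal_transformation_matrix)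
  have F: "fisher x = Q ** D ** transpose Q"
  proof -
    have "fisher x $ i $ j = (Q ** D ** transpose Q) $ i $ j" for i j
      unfolding fisher_entry[OF g fx] matrix_matrix_mult_def Q_def D_def transpose_def
      by (simp add: sum_distrib_right sum_distrib_left algebra_simps)
        (subst sum.swap, simp add: algebra_simps)
    then show ?thesis by (simp add: vec_eq_iff)
  qed
  have dQ: "det Q * det Q = 1" using det_orthogonal_matrix[OF oQ] by auto
  have "det (fisher x) = det Q * det D * det Q" by (simp add: F det_mul)
  also have "\<dots> = det D" using dQ by (simp add: algebra_simps)
  also have "det D = (\<Prod>a\<in>UNIV. D $ a $ a)"
    by (rule det_diagonal) (simp add: D_def Dd_def)
  also have "\<dots> = (\<Prod>a\<in>UNIV. Dd (norm x) i0 a a)" by (simp add: D_def)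
  also have "\<dots> = Dd (norm x) i0 i0 i0 * (\<Prod>a\<in>UNIV - {i0}. Dd (norm x) i0 a a)"
    by (subst prod.remove[of _ i0]) auto
  also have "(\<Prod>a\<in>UNIV - {i0}. Dd (norm x) i0 a a) = (\<Prod>a\<in>UNIV - {i0}. zeta 0 (norm x))"
    by (intro prod.cong) (auto simp: Dd_def)
  also have "\<dots> = zeta 0 (norm x) ^ (CARD('n) - 1)"
    by (simp add: card_Diff_singleton)
  finally show ?thesis by (simp add: Dd_def)
qed

end
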